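(* If a generalised binary matrix $\mathbf{Y}$ is minimally non-firm, then $i(\mathbf{Y})=br(\mathbf{Y})-1$.
   Context: A generalised binary matrix is a matrix with entries in $\{0,1,?\}$. For such $\mathbf{Y}$, $\mathrm{supp}(\mathbf{Y})=\{(i,j):y_{i,j}=1\}$. A submatrix indexed by $I\times J$ is obtained by deleting rows not in $I$ and columns not in $J$; it is proper if it omits at least one row or column. A rectangle of $\mathbf{Y}$ is a set $I\times J$ of positions containing no entry equal to $0$. An isolated set is a subset of $\mathrm{supp}(\mathbf{Y})$ no two distinct elements of which lie in a common rectangle; $i(\mathbf{Y})$ is the maximum size of an isolated set. $br(\mathbf{Y})$ is the minimum number of rectangles whose union contains $\mathrm{supp}(\mathbf{Y})$ ($?$ entries need not be covered). $\mathbf{Y}$ is minimally non-firm if $i(\mathbf{Y})<br(\mathbf{Y})$ and $i(\mathbf{Y}')=br(\mathbf{Y}')$ for every proper submatrix $\mathbf{Y}'$ of $\mathbf{Y}$. *)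

theory Defs
  imports Main
begin

text \<open>Entries of a generalised binary matrix: 0, 1 or ?.\<close>
datatype gentry = Zero | One | Unknown

text \<open>A generalised binary matrix is given by a finite set R of row indices,
a finite set C of column indices and an entry function Y.  The submatrix
indexed by I \<times> J (I \<subseteq> R, J \<subseteq> C) is the same entry function with
row set I and column set J.\<close>

definition supp :: "'r set \<Rightarrow> 'c set \<Rightarrow> ('r \<Rightarrow> 'c \<Rightarrow> gentry) \<Rightarrow> ('r \<times> 'c) set" where
  "supp R C Y = {(i, j). i \<in> R \<and> j \<in> C \<and> Y i j = One}"

definition is_rectangle :: "'r set \<Rightarrow> 'c set \<Rightarrow> ('r \<Rightarrow> 'c \<Rightarrow> gentry) \<Rightarrow> 'r set \<Rightarrow> 'c set \<Rightarrow> bool" where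
  "is_rectangle R C Y I J \<longleftrightarrow> I \<subseteq> R \<and> J \<subseteq> C \<and> (\<forall>i\<in>I. \<forall>j\<in>J. Y i j \<noteq> Zero)"

definition isolated_set :: "'r set \<Rightarrow> 'c set \<Rightarrow> ('r \<Rightarrow> 'c \<Rightarrow> gentry) \<Rightarrow> ('r \<times> 'c) set \<Rightarrow> bool" where
  "isolated_set R C Y S \<longleftrightarrow> S \<subseteq> supp R C Y \<and>
     (\<forall>x\<in>S. \<forall>y\<in>S. x \<noteq> y \<longrightarrow> \<not> (\<exists>I J. is_rectangle R C Y I J \<and> x \<in> I \<times> J \<and> y \<in> I \<times> J))"

definition isol_num :: "'r set \<Rightarrow> 'c set \<Rightarrow> ('r \<Rightarrow> 'c \<Rightarrow> gentry) \<Rightarrow> nat" where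
  "isol_num R C Y = Max {card S | S. isolated_set R C Y S}"

definition br :: "'r set \<Rightarrow> 'c set \<Rightarrow> ('r \<Rightarrow> 'c \<Rightarrow> gentry) \<Rightarrow> nat" where
  "br R C Y = (LEAST k. \<exists>F. finite F \<and> card F = k \<and>
      (\<forall>(I, J)\<in>F. is_rectangle R C Y I J) \<and> supp R C Y \<subseteq> (\<Union>(I, J)\<in>F. I \<times> J))"

definition minimally_non_firm :: "'r set \<Rightarrow> 'c set \<Rightarrow> ('r \<Rightarrow> 'c \<Rightarrow> gentry) \<Rightarrow> bool" where
  "minimally_non_firm R C Y \<longleftrightarrow> isol_num R C Y < br R C Y \<and>
     (\<forall>I J. I \<subseteq> R \<longrightarrow> J \<subseteq> C \<longrightarrow> (I \<noteq> R \<or> J \<noteq> C) \<longrightarrow> isol_num I J Y = br I J Y)"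

end

theory Submission
  imports Defs
begin

lemma supp_finite: "finite R \<Longrightarrow> finite C \<Longrightarrow> finite (supp R C Y)"
  by (rule finite_subset[of _ "R \<times> C"]) (auto simp: supp_def)

lemma br_exists:
  assumes "finite R" "finite C"
  shows "\<exists>F. finite F \<and> card F = br R C Y \<and>
      (\<forall>(I, J)\<in>F. is_rectangle R C Y I J) \<and> supp R C Y \<subseteq> (\<Union>(I, J)\<in>F. I \<times> J)"
proof -
  let ?F = "(\<lambda>(i,j). ({i},{j})) ` supp R C Y"
  have "finite ?F" using supp_finite[OF assms] by simp
  moreover have "\<forall>(I, J)\<in>?F. is_rectangle R C Y I J"
    by (auto simp: supp_def is_rectangle_def)
  moreover have "supp R C Y \<subseteq> (\<Union>(I, J)\<in>?F. I \<times> J)" by auto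
  ultimately have "\<exists>k F. finite F \<and> card F = k \<and>
      (\<forall>(I, J)\<in>F. is_rectangle R C Y I J) \<and> supp R C Y \<subseteq> (\<Union>(I, J)\<in>F. I \<times> J)" by blast
  then show ?thesis unfolding br_def by (rule LeastI_ex)
qed

lemma br_le:
  assumes "finite F" "\<forall>(I, J)\<in>F. is_rectangle R C Y I J" "supp R C Y \<subseteq> (\<Union>(I, J)\<in>F. I \<times> J)"
  shows "br R C Y \<le> card F"
  unfolding br_def by (rule Least_le) (use assms in blast)

lemma isol_fin:
  assumes "finite R" "finite C"
  shows "finite {card S | S. isolated_set R C Y S}" "{card S | S. isolated_set R C Y S} \<noteq> {}"
proof -
  have "{card S | S. isolated_set R C Y S} \<subseteq> {..card (supp R C Y)}"
    using supp_finite[OF assms] by (auto simp: isolated_set_def intro: card_mono)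
  then show "finite {card S | S. isolated_set R C Y S}" using finite_subset by blast
  have "isolated_set R C Y {}" by (simp add: isolated_set_def)
  then show "{card S | S. isolated_set R C Y S} \<noteq> {}" by blast
qed

lemma isol_ge:
  assumes "finite R" "finite C" "isolated_set R C Y S"
  shows "card S \<le> isol_num R C Y"
  unfolding isol_num_def using isol_fin[OF assms(1,2)] assms(3) by (auto intro: Max_ge)

lemma isol_attained:
  assumes "finite R" "finite C"
  shows "\<exists>S. isolated_set R C Y S \<and> card S = isol_num R C Y"
proof -
  have "isol_num R C Y \<in> {card S | S. isolated_set R C Y S}"
    unfolding isol_num_def using isol_fin[OF assms] by (rule Max_in)
  then obtain S where "isol_num R C Y = card S" "isolated_set R C Y S" by (auto simp only: mem_Collect_eq)
  then show ?thesis by metis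
qed

theorem lemma6:
  fixes R :: "'r set" and C :: "'c set" and Y :: "'r \<Rightarrow> 'c \<Rightarrow> gentry"
  assumes "finite R" and "finite C"
    and "minimally_non_firm R C Y"
  shows "isol_num R C Y = br R C Y - 1"
proof -
  have lt: "isol_num R C Y < br R C Y" and sub:
    "\<And>I J. I \<subseteq> R \<Longrightarrow> J \<subseteq> C \<Longrightarrow> (I \<noteq> R \<or> J \<noteq> C) \<Longrightarrow> isol_num I J Y = br I J Y"
    using assms(3) unfolding minimally_non_firm_def by auto
  have "R \<noteq> {}"
  proof
    assume "R = {}"
    then have "supp R C Y = {}" by (simp add: supp_def)
    then have "br R C Y \<le> card ({} :: ('r set \<times> 'c set) set)" by (intro br_le) auto
    then show False using lt by simp
  qed
  then obtain r where r: "r \<in> R" by blast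
  let ?R = "R - {r}"
  have fR: "finite ?R" using assms(1) by simp
  have eq: "isol_num ?R C Y = br ?R C Y" using sub[of ?R C] r by auto
  from br_exists[OF fR assms(2), of Y] obtain F where F0: "finite F \<and> card F = br ?R C Y \<and>
    (\<forall>(I, J)\<in>F. is_rectangle ?R C Y I J) \<and> supp ?R C Y \<subseteq> (\<Union>(I, J)\<in>F. I \<times> J)"
    by (elim exE)
  note F = conjunct1[OF F0] conjunct1[OF conjunct2[OF F0]] conjunct1[OF conjunct2[OF conjunct2[OF F0]]]
    conjunct2[OF conjunct2[OF conjunct2[OF F0]]]
  let ?G = "insert ({r}, {j\<in>C. Y r j \<noteq> Zero}) F"
  have "br R C Y \<le> card ?G"
  proof (rule br_le)
    show "finite ?G" using F by simp
    show "\<forall>(I, J)\<in>?G. is_rectangle R C Y I J"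
      using F(3) r by (auto simp: is_rectangle_def)
    show "supp R C Y \<subseteq> (\<Union>(I, J)\<in>?G. I \<times> J)"
    proof
      fix x assume x: "x \<in> supp R C Y"
      obtain i j where ij: "x = (i,j)" by (cases x)
      show "x \<in> (\<Union>(I, J)\<in>?G. I \<times> J)"
      proof (cases "i = r")
        case True then show ?thesis using x ij by (auto simp: supp_def)
      next
        case False
        then have "x \<in> supp ?R C Y" using x ij by (auto simp: supp_def)
        then show ?thesis using F(4) by blast
      qed
    qed
  qed
  also have "card ?G \<le> card F + 1" using F(1) by (simp add: card_insert_if)
  finally have b1: "br R C Y \<le> br ?R C Y + 1" using F(2) by simp
  obtain S where S: "isolated_set ?R C Y S" "card S = isol_num ?R C Y"
    using isol_attained[OF fR assms(2)] by blast
  have "isolated_set R C Y S"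
    unfolding isolated_set_def
  proof (intro conjI ballI impI notI)
    show "S \<subseteq> supp R C Y" using S(1) by (auto simp: isolated_set_def supp_def)
  next
    fix x y assume xy: "x \<in> S" "y \<in> S" "x \<noteq> y"
      and "\<exists>I J. is_rectangle R C Y I J \<and> x \<in> I \<times> J \<and> y \<in> I \<times> J"
    then obtain I J where IJ: "is_rectangle R C Y I J" "x \<in> I \<times> J" "y \<in> I \<times> J" by blast
    have "x \<in> ?R \<times> C" "y \<in> ?R \<times> C" using S(1) xy by (auto simp: isolated_set_def supp_def)
    then have "is_rectangle ?R C Y (I \<inter> ?R) J \<and> x \<in> (I \<inter> ?R) \<times> J \<and> y \<in> (I \<inter> ?R) \<times> J"
      using IJ by (auto simp: is_rectangle_def)
    then show False using S(1) xy unfolding isolated_set_def by blast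
  qed
  then have "isol_num ?R C Y \<le> isol_num R C Y"
    using isol_ge[OF assms(1,2)] S(2) by metis
  then show ?thesis using b1 eq lt by linarith
qed

end
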